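(* Let $l>0$ (wheelbase length), $d\ge 0$ (distance from the rear axle center to the sensor point along the vehicle's longitudinal symmetry axis), and $\gamma_{\max}\in(0,\pi/2)$ (physical maximum steering angle). Let $\kappa_0\in\mathbb{R}$ be a constant path curvature that the vehicle is capable of following, i.e. $|d\,\kappa_0|<1$ and there exists a steering angle $\gamma$ with $|\gamma|\le\gamma_{\max}$ and $\tan\gamma=\dfrac{l\,\kappa_0}{\sqrt{1-d^2\kappa_0^2}}$. Define $\lambda_1=\sqrt{1-d^2\kappa_0^2}$ and $\lambda_2=1+(l^2-d^2)\kappa_0^2$. Then: (1) $|\kappa_0|\le\overline{\kappa}_0$, where $\overline{\kappa}_0=\dfrac{\tan\gamma_{\max}}{\sqrt{l^2+d^2\tan^2\gamma_{\max}}}$; (2) $\lambda_1\in[\underline{\lambda}_1,1]$, where $\underline{\lambda}_1=\dfrac{l}{\sqrt{l^2+d^2\tan^2\gamma_{\max}}}>0$; (3) $\lambda_2>0$.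
   Context: Kinematic bicycle model with no side slip: a vehicle with wheelbase $l$ follows a planar path with its sensor point A located on the longitudinal symmetry axis at distance $d$ in front of the rear axle center. When point A moves exactly along a circle of curvature $\kappa_0$, the required steering angle $\gamma$ satisfies $\tan\gamma = l\kappa_0/\sqrt{1-d^2\kappa_0^2}$. The standing assumption is that road curvatures are within the vehicle's steering capability, i.e. such a $\gamma$ with $|\gamma|\le\gamma_{\max}$ exists. *)

theory Defs
  imports Complex_Main
begin

end

theory Submission
  imports Defs
begin

theorem claim1:
  fixes l d gmax \<kappa>0 :: real
  assumes hl: "l > 0"
    and hd: "d \<ge> 0"
    and hg: "0 < gmax" "gmax < pi / 2"
    and hk: "\<bar>d * \<kappa>0\<bar> < 1"
    and hsteer: "\<exists>\<gamma>::real. \<bar>\<gamma>\<bar> \<le> gmax \<and>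
                   tan \<gamma> = l * \<kappa>0 / sqrt (1 - d\<^sup>2 * \<kappa>0\<^sup>2)"
  shows "\<bar>\<kappa>0\<bar> \<le> tan gmax / sqrt (l\<^sup>2 + d\<^sup>2 * (tan gmax)\<^sup>2)
     \<and> (l / sqrt (l\<^sup>2 + d\<^sup>2 * (tan gmax)\<^sup>2) > 0
        \<and> l / sqrt (l\<^sup>2 + d\<^sup>2 * (tan gmax)\<^sup>2) \<le> sqrt (1 - d\<^sup>2 * \<kappa>0\<^sup>2)
        \<and> sqrt (1 - d\<^sup>2 * \<kappa>0\<^sup>2) \<le> 1)
     \<and> 1 + (l\<^sup>2 - d\<^sup>2) * \<kappa>0\<^sup>2 > 0"
proof -
  obtain g where g1: "\<bar>g\<bar> \<le> gmax" and g2: "tan g = l * \<kappa>0 / sqrt (1 - d\<^sup>2 * \<kappa>0\<^sup>2)"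
    using hsteer by blast
  define T where "T = tan gmax"
  define s where "s = sqrt (1 - d\<^sup>2 * \<kappa>0\<^sup>2)"
  have dk: "d\<^sup>2 * \<kappa>0\<^sup>2 < 1"
  proof -
    have "(d*\<kappa>0)\<^sup>2 < 1" using hk by (simp add: abs_less_iff power2_eq_square) (smt (verit) mult_less_cancel_right2 mult_minus_left mult_minus_right)
    thus ?thesis by (simp add: power_mult_distrib)
  qed
  have s0: "s > 0" unfolding s_def using dk by simp
  have ss: "s\<^sup>2 = 1 - d\<^sup>2 * \<kappa>0\<^sup>2" unfolding s_def using dk by simp
  have T0: "T > 0" unfolding T_def using hg by (simp add: tan_gt_zero)
  have tabs: "tan \<bar>g\<bar> = \<bar>tan g\<bar>"
  proof (cases "g \<ge> 0")
    case True
    then have "tan 0 \<le> tan g" using g1 hg by (intro tan_mono_le) auto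
    thus ?thesis using True by simp
  next
    case False
    then have "tan 0 \<le> tan (-g)" using g1 hg by (intro tan_mono_le) auto
    thus ?thesis using False by (simp add: tan_minus)
  qed
  have "tan \<bar>g\<bar> \<le> T"
    unfolding T_def using hg g1 by (intro tan_mono_le) auto
  hence "l * \<bar>\<kappa>0\<bar> / s \<le> T" using tabs g2 hl s0 by (simp add: s_def abs_mult abs_divide)
  hence "l * \<bar>\<kappa>0\<bar> \<le> T * s" using s0 by (simp add: divide_le_eq)
  hence "(l * \<bar>\<kappa>0\<bar>)\<^sup>2 \<le> (T * s)\<^sup>2" using hl by (intro power_mono) auto
  hence key: "\<kappa>0\<^sup>2 * (l\<^sup>2 + d\<^sup>2 * T\<^sup>2) \<le> T\<^sup>2" using ss
    by (simp add: power_mult_distrib algebra_simps)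
  define R where "R = sqrt (l\<^sup>2 + d\<^sup>2 * T\<^sup>2)"
  have R0: "R > 0" unfolding R_def using hl by (intro real_sqrt_gt_zero) (simp add: add_pos_nonneg)
  have RR: "R\<^sup>2 = l\<^sup>2 + d\<^sup>2 * T\<^sup>2" unfolding R_def by (simp add: add_nonneg_nonneg)
  have "(\<bar>\<kappa>0\<bar> * R)\<^sup>2 \<le> T\<^sup>2" using key RR by (simp add: power_mult_distrib)
  hence "\<bar>\<kappa>0\<bar> * R \<le> T" using T0 by (meson abs_ge_zero power2_le_imp_le less_imp_le)
  hence c1: "\<bar>\<kappa>0\<bar> \<le> T / R" using R0 by (simp add: le_divide_eq)
  have "(l / R)\<^sup>2 \<le> s\<^sup>2"
  proof -
    have "\<kappa>0\<^sup>2 \<le> T\<^sup>2 / R\<^sup>2" using key RR R0 by (subst pos_le_divide_eq) (simp_all add: mult.commute, metis RR R0 zero_less_power)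
    hence "d\<^sup>2 * \<kappa>0\<^sup>2 \<le> d\<^sup>2 * T\<^sup>2 / R\<^sup>2"
      using mult_left_mono[of "\<kappa>0\<^sup>2" "T\<^sup>2 / R\<^sup>2" "d\<^sup>2"] by simp
    moreover have "1 = (l\<^sup>2 + d\<^sup>2 * T\<^sup>2) / R\<^sup>2" using RR R0 by (metis divide_self less_irrefl zero_less_power)
    ultimately have "l\<^sup>2 / R\<^sup>2 \<le> 1 - d\<^sup>2 * \<kappa>0\<^sup>2" by (simp add: add_divide_distrib)
    thus ?thesis using ss by (simp add: power_divide)
  qed
  hence c2: "l / R \<le> s" using s0 by (meson power2_le_imp_le less_imp_le)
  have c3: "s \<le> 1" unfolding s_def by simp
  have c4: "1 + (l\<^sup>2 - d\<^sup>2) * \<kappa>0\<^sup>2 > 0" using dk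
    by (simp add: algebra_simps) (smt (verit) zero_le_power2 zero_le_mult_iff)
  show ?thesis using c1 c2 c3 c4 hl R0
    unfolding T_def[symmetric] R_def[symmetric] s_def[symmetric] by simp
qed

end
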